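(* Let $\sigma\in\mathbb Z_{\ge1}$. The normalizer $\mathrm{Norm}_P(\Lambda_\sigma)=\{p\in NAM:p\Lambda_\sigma p^{-1}=\Lambda_\sigma\}$ is the semi-direct product of the groups $\mathrm{Norm}_N(\Lambda_\sigma)=\{n(\beta/\sigma,\rho):\beta\in\mathbb Z[i],\rho\in\mathbb R\}$ and $\mathrm{Norm}_M(\Lambda_\sigma)=\{m(\zeta)\in M:\zeta^{12}=1\}$.
   Context: $G=\mathrm{SU}(2,1)=\{g\in\mathrm{SL}_3(\mathbb C):\bar g^t\,\mathrm{diag}(1,1,-1)\,g=\mathrm{diag}(1,1,-1)\}$ with subgroups $N=\{n(b,r)=\begin{pmatrix}1+ir-\frac{|b|^2}2&b&-ir+\frac{|b|^2}2\\-\bar b&1&\bar b\\ ir-\frac{|b|^2}2&b&1-ir+\frac{|b|^2}2\end{pmatrix}:b\in\mathbb C,r\in\mathbb R\}$, $A=\{a(t)=\begin{pmatrix}\frac{t+t^{-1}}2&0&\frac{t-t^{-1}}2\\0&1&0\\\frac{t-t^{-1}}2&0&\frac{t+t^{-1}}2\end{pmatrix}:t>0\}$, $M=\{m(\zeta)=\mathrm{diag}(\zeta,\zeta^{-2},\zeta):|\zeta|=1\}$. Write $n(x,y,r)=n(x+iy,r)$. $\Lambda_\sigma$ is the lattice in $N$ generated by $n(1,0,0)$, $n(0,1,0)$, $n(0,0,2/\sigma)$. *)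

theory Defs
  imports "HOL-Analysis.Analysis"
begin

text \<open>3x3 complex matrices, rows/columns indexed by the type 3 (indices 1,2,3).\<close>

definition mat3 :: "complex \<Rightarrow> complex \<Rightarrow> complex \<Rightarrow> complex \<Rightarrow> complex \<Rightarrow> complex
    \<Rightarrow> complex \<Rightarrow> complex \<Rightarrow> complex \<Rightarrow> complex^3^3" where
  "mat3 a11 a12 a13 a21 a22 a23 a31 a32 a33 =
     (\<chi> i j. if i = 1 then (if j = 1 then a11 else if j = 2 then a12 else a13)
             else if i = 2 then (if j = 1 then a21 else if j = 2 then a22 else a23)
             else (if j = 1 then a31 else if j = 2 then a32 else a33))"

definition nmat :: "complex \<Rightarrow> real \<Rightarrow> complex^3^3" where
  "nmat b r = mat3
     (1 + \<i> * r - (cmod b)^2 / 2)  b  (- \<i> * r + (cmod b)^2 / 2)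
     (- cnj b)  1  (cnj b)
     (\<i> * r - (cmod b)^2 / 2)  b  (1 - \<i> * r + (cmod b)^2 / 2)"

definition nxyr :: "real \<Rightarrow> real \<Rightarrow> real \<Rightarrow> complex^3^3" where
  "nxyr x y r = nmat (Complex x y) r"

definition amat :: "real \<Rightarrow> complex^3^3" where
  "amat t = mat3 ((t + 1/t)/2) 0 ((t - 1/t)/2)
                 0 1 0
                 ((t - 1/t)/2) 0 ((t + 1/t)/2)"

definition mmat :: "complex \<Rightarrow> complex^3^3" where
  "mmat z = mat3 z 0 0  0 (inverse (z^2)) 0  0 0 z"

definition Ngrp :: "(complex^3^3) set" where
  "Ngrp = {nmat b r | b r. True}"

definition Agrp :: "(complex^3^3) set" where
  "Agrp = {amat t | t. t > 0}"

definition Mgrp :: "(complex^3^3) set" where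
  "Mgrp = {mmat z | z. cmod z = 1}"

definition Pgrp :: "(complex^3^3) set" where
  "Pgrp = {n ** a ** m | n a m. n \<in> Ngrp \<and> a \<in> Agrp \<and> m \<in> Mgrp}"

inductive_set gen_subgroup :: "(complex^3^3) set \<Rightarrow> (complex^3^3) set" for S where
  gen_one: "mat 1 \<in> gen_subgroup S"
| gen_base: "g \<in> S \<Longrightarrow> g \<in> gen_subgroup S"
| gen_mult: "g \<in> gen_subgroup S \<Longrightarrow> h \<in> gen_subgroup S \<Longrightarrow> g ** h \<in> gen_subgroup S"
| gen_inv: "g \<in> gen_subgroup S \<Longrightarrow> matrix_inv g \<in> gen_subgroup S"

definition Lambda :: "nat \<Rightarrow> (complex^3^3) set" where
  "Lambda \<sigma> = gen_subgroup {nxyr 1 0 0, nxyr 0 1 0, nxyr 0 0 (2 / real \<sigma>)}"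

definition normalizer_in :: "(complex^3^3) set \<Rightarrow> (complex^3^3) set \<Rightarrow> (complex^3^3) set" where
  "normalizer_in H L = {p \<in> H. (\<lambda>x. p ** x ** matrix_inv p) ` L = L}"

definition gauss_ints :: "complex set" where
  "gauss_ints = {Complex (of_int a) (of_int b) | a b. True}"

end

theory Submission
  imports Defs
begin
lemma minv_unique:
  fixes A B :: "complex^3^3"
  assumes "A ** B = mat 1" "B ** A = mat 1"
  shows "matrix_inv A = B"
proof -
  let ?P = "\<lambda>A'. A ** A' = mat 1 \<and> A' ** A = mat 1"
  have "?P B" using assms by simp
  hence P: "?P (matrix_inv A)" unfolding matrix_inv_def by (rule someI)
  have "matrix_inv A = matrix_inv A ** (A ** B)" using assms by (simp add: matrix_mul_rid)
  also have "\<dots> = (matrix_inv A ** A) ** B" by (simp add: matrix_mul_assoc)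
  also have "\<dots> = B" using P by (simp add: matrix_mul_lid)
  finally show ?thesis .
qed

lemma mat3_eq: "mat3 a11 a12 a13 a21 a22 a23 a31 a32 a33 = mat3 b11 b12 b13 b21 b22 b23 b31 b32 b33
  \<longleftrightarrow> a11=b11 \<and> a12=b12 \<and> a13=b13 \<and> a21=b21 \<and> a22=b22 \<and> a23=b23 \<and> a31=b31 \<and> a32=b32 \<and> a33=b33"
  unfolding mat3_def vec_eq_iff forall_3 by simp

lemma mat3_mult: "mat3 a11 a12 a13 a21 a22 a23 a31 a32 a33 ** mat3 b11 b12 b13 b21 b22 b23 b31 b32 b33
  = mat3 (a11*b11+a12*b21+a13*b31) (a11*b12+a12*b22+a13*b32) (a11*b13+a12*b23+a13*b33)
         (a21*b11+a22*b21+a23*b31) (a21*b12+a22*b22+a23*b32) (a21*b13+a22*b23+a23*b33)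
         (a31*b11+a32*b21+a33*b31) (a31*b12+a32*b22+a33*b32) (a31*b13+a32*b23+a33*b33)"
  unfolding mat3_def matrix_matrix_mult_def vec_eq_iff forall_3 sum_3 by simp

lemma mat3_one: "mat 1 = mat3 1 0 0 0 1 0 0 0 1"
  unfolding mat3_def mat_def vec_eq_iff forall_3 by simp

lemma cmsq: "cmod b * cmod b = Re b * Re b + Im b * Im b"
  by (metis cmod_power2 power2_eq_square)

lemma n_mult: "nmat b r ** nmat b' r' = nmat (b+b') (r+r'+Im(cnj b * b'))"
  unfolding nmat_def mat3_mult mat3_eq
  by (simp add: complex_eq_iff power2_eq_square cmsq field_simps)

lemma n_zero: "nmat 0 0 = mat 1"
  unfolding nmat_def mat3_one mat3_eq by simp

lemma a_conj_gen:
  fixes p q :: real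
  assumes pq: "p*p - q*q = 1"
  shows "mat3 p 0 q 0 1 0 q 0 p ** nmat b r ** mat3 p 0 (-q) 0 1 0 (-q) 0 p = nmat (of_real (p+q) * b) ((p+q)^2 * r)"
proof -
  have m: "cmod (of_real (p+q) * b) * cmod (of_real (p+q) * b) = (p+q)*(p+q) * (Re b * Re b + Im b * Im b)"
    by (simp add: cmsq algebra_simps)
  have pq': "p*p = 1 + q*q" using pq by simp
  have pq2: "p*(p*x) = x + q*(q*x)" for x
    by (simp add: mult.assoc[symmetric] pq' distrib_right)
  show ?thesis
    unfolding nmat_def mat3_mult mat3_eq
    apply (simp only: complex_eq_iff power2_eq_square m cmsq)
    apply (simp del: of_real_add)
    apply (intro conjI)
    using pq by (simp_all add: field_simps) (simp_all add: algebra_simps pq2)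
qed

lemma a_conj: assumes "t > 0" shows "amat t ** nmat b r ** amat (1/t) = nmat (of_real t * b) (t^2 * r)"
proof -
  define p q where "p = (t + 1/t)/2" and "q = (t - 1/t)/2"
  have pq: "p*p - q*q = 1" "p + q = t" using assms unfolding p_def q_def by (simp_all add: field_simps)
  have e1: "amat t = mat3 p 0 q 0 1 0 q 0 p" unfolding amat_def p_def q_def by simp
  have e2: "amat (1/t) = mat3 p 0 (-q) 0 1 0 (-q) 0 p" unfolding amat_def p_def q_def mat3_eq by (simp add: field_simps)
  show ?thesis unfolding e1 e2 a_conj_gen[OF pq(1)] pq(2) ..
qed

lemma a_inv: "t > 0 \<Longrightarrow> amat t ** amat (1/t) = mat 1"
  unfolding amat_def mat3_one mat3_mult mat3_eq
  by (simp add: complex_eq_iff algebra_simps power2_eq_square field_simps)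

lemma a_one: "amat 1 = mat 1"
  unfolding amat_def mat3_one mat3_eq by simp

lemma diag_conj: assumes "z \<noteq> 0" "w \<noteq> 0"
  shows "mat3 z 0 0 0 w 0 0 0 z ** mat3 a11 a12 a13 a21 a22 a23 a31 a32 a33 ** mat3 (1/z) 0 0 0 (1/w) 0 0 0 (1/z)
    = mat3 a11 (z*a12/w) a13 (w*a21/z) a22 (w*a23/z) a31 (z*a32/w) a33"
  unfolding mat3_mult mat3_eq using assms by simp

lemma m_conj: assumes "cmod z = 1" shows "mmat z ** nmat b r ** mmat (1/z) = nmat (z^3 * b) r"
proof -
  have z0: "z \<noteq> 0" using assms by auto
  have zc: "z * cnj z = 1" using assms complex_norm_square[of z] by simp
  have c: "cnj z = 1/z" using zc z0 by (simp add: field_simps mult.commute)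
  have m: "cmod (z^3*b) = cmod b" using assms by (simp add: norm_mult norm_power)
  have cb: "cnj (z^3*b) = cnj b / z^3" using c by (simp add: field_simps)
  have e1: "mmat z = mat3 z 0 0 0 (inverse (z^2)) 0 0 0 z" by (simp add: mmat_def)
  have e2: "mmat (1/z) = mat3 (1/z) 0 0 0 (1/inverse (z^2)) 0 0 0 (1/z)" by (simp add: mmat_def power_one_over divide_inverse power_inverse)
  have w0: "inverse (z^2) \<noteq> 0" using z0 by simp
  have k1: "z * b / inverse (z^2) = z^3 * b" by (simp add: field_simps power2_eq_square power3_eq_cube)
  have k2: "inverse (z^2) * (- cnj b) / z = - (cnj b / z^3)" using z0 by (simp add: field_simps power2_eq_square power3_eq_cube)
  have k3: "inverse (z^2) * (cnj b) / z = (cnj b / z^3)" using z0 by (simp add: field_simps power2_eq_square power3_eq_cube)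
  show ?thesis
    unfolding e1 e2 unfolding nmat_def diag_conj[OF z0 w0] k1 k2 k3 m cb by simp
qed

lemma m_inv: "z \<noteq> 0 \<Longrightarrow> mmat z ** mmat (1/z) = mat 1"
  unfolding mmat_def mat3_one mat3_mult mat3_eq
  by (simp add: field_simps)

lemma m_one: "mmat 1 = mat 1"
  unfolding mmat_def mat3_one mat3_eq by simp

definition LamS :: "nat \<Rightarrow> (complex^3^3) set" where
  "LamS s = {nmat (Complex (of_int a) (of_int c)) (of_int a * of_int c + 2 * of_int k / real s) | a c k. True}"

lemma cadd[simp]: "Complex a b + Complex c d = Complex (a+c) (b+d)"
  and csub[simp]: "Complex a b - Complex c d = Complex (a-c) (b-d)"
  and c00[simp]: "Complex 0 0 = 0"
  by (simp_all add: complex_eq_iff)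

lemma n_inv: "matrix_inv (nmat b r) = nmat (-b) (-r)"
  by (rule minv_unique) (simp_all add: n_mult n_zero)

lemma n_inj: "nmat b r = nmat b' r' \<Longrightarrow> b = b' \<and> r = r'"
  unfolding nmat_def mat3_eq by (simp add: complex_eq_iff)

lemma n_conj: "nmat b \<rho> ** nmat \<beta> r ** nmat (-b) (-\<rho>) = nmat \<beta> (r + 2 * Im (cnj b * \<beta>))"
  by (simp add: n_mult algebra_simps)

lemma LamS_mult: assumes "s \<ge> 1" "x \<in> LamS s" "y \<in> LamS s" shows "x ** y \<in> LamS s"
proof -
  obtain a c k where x: "x = nmat (Complex (of_int a) (of_int c)) (of_int a * of_int c + 2 * of_int k / real s)"
    using assms(2) unfolding LamS_def by auto
  obtain a' c' k' where y: "y = nmat (Complex (of_int a') (of_int c')) (of_int a' * of_int c' + 2 * of_int k' / real s)"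
    using assms(3) unfolding LamS_def by auto
  have "x ** y = nmat (Complex (of_int (a+a')) (of_int (c+c'))) (of_int (a+a') * of_int (c+c') + 2 * of_int (k + k' - int s * c * a') / real s)"
    unfolding x y n_mult using assms(1) by (intro arg_cong2[where f=nmat]) (simp_all add: field_simps complex_eq_iff)
  thus ?thesis unfolding LamS_def by blast
qed

lemma LamS_inv: assumes "s \<ge> 1" "x \<in> LamS s" shows "matrix_inv x \<in> LamS s"
proof -
  obtain a c k where x: "x = nmat (Complex (of_int a) (of_int c)) (of_int a * of_int c + 2 * of_int k / real s)"
    using assms(2) unfolding LamS_def by auto
  have "matrix_inv x = nmat (Complex (of_int (-a)) (of_int (-c))) (of_int (-a) * of_int (-c) + 2 * of_int (- k - int s * a * c) / real s)"
    unfolding x n_inv using assms(1) by (intro arg_cong2[where f=nmat]) (simp_all add: field_simps complex_eq_iff)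
  thus ?thesis unfolding LamS_def by blast
qed

lemma Lambda_sub: assumes "s \<ge> 1" shows "Lambda s \<subseteq> LamS s"
proof
  fix x assume "x \<in> Lambda s"
  thus "x \<in> LamS s" unfolding Lambda_def
  proof (induction rule: gen_subgroup.induct)
    case gen_one
    have "mat 1 = nmat (Complex (of_int 0) (of_int 0)) (of_int 0 * of_int 0 + 2 * of_int 0 / real s)"
      by (simp add: n_zero)
    then show ?case unfolding LamS_def by blast
  next
    case (gen_base g)
    then consider "g = nxyr 1 0 0" | "g = nxyr 0 1 0" | "g = nxyr 0 0 (2 / real s)" by auto
    then show ?case
    proof cases
      case 1
      have "g = nmat (Complex (of_int 1) (of_int 0)) (of_int 1 * of_int 0 + 2 * of_int 0 / real s)"
        using 1 by (simp add: nxyr_def)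
      then show ?thesis unfolding LamS_def by blast
    next
      case 2
      have "g = nmat (Complex (of_int 0) (of_int 1)) (of_int 0 * of_int 1 + 2 * of_int 0 / real s)"
        using 2 by (simp add: nxyr_def)
      then show ?thesis unfolding LamS_def by blast
    next
      case 3
      have "g = nmat (Complex (of_int 0) (of_int 0)) (of_int 0 * of_int 0 + 2 * of_int 1 / real s)"
        using 3 by (simp add: nxyr_def)
      then show ?thesis unfolding LamS_def by blast
    qed
  next
    case (gen_mult g h)
    then show ?case using LamS_mult assms by blast
  next
    case (gen_inv g)
    then show ?case using LamS_inv assms by blast
  qed
qed

lemma int_pow_in:
  fixes f :: "int \<Rightarrow> complex^3^3"
  assumes one: "f 0 = mat 1" and step: "\<And>i. f (i + 1) = f i ** g" and stepm: "\<And>i. f (i - 1) = f i ** matrix_inv g"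
    and g: "g \<in> gen_subgroup S"
  shows "f i \<in> gen_subgroup S"
proof -
  have pos: "f (int n) \<in> gen_subgroup S" for n
  proof (induction n)
    case 0 then show ?case using one by (auto intro: gen_subgroup.intros)
  next
    case (Suc n)
    have e: "int (Suc n) = int n + 1" by simp
    have "f (int (Suc n)) = f (int n) ** g" unfolding e by (rule step)
    then show ?case using Suc g by (auto intro: gen_subgroup.intros)
  qed
  have neg: "f (- int n) \<in> gen_subgroup S" for n
  proof (induction n)
    case 0 then show ?case using one by (auto intro: gen_subgroup.intros)
  next
    case (Suc n)
    have e: "- int (Suc n) = - int n - 1" by simp
    have "f (- int (Suc n)) = f (- int n) ** matrix_inv g" unfolding e by (rule stepm)
    then show ?case using Suc g by (auto intro: gen_subgroup.intros)
  qed
  show ?thesis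
  proof (cases "i \<ge> 0")
    case True then show ?thesis using pos[of "nat i"] by simp
  next
    case False then show ?thesis using neg[of "nat (-i)"] by simp
  qed
qed

lemma Lambda_sup: assumes "s \<ge> 1" shows "LamS s \<subseteq> Lambda s"
proof
  fix x assume "x \<in> LamS s"
  then obtain a c k where x: "x = nmat (Complex (of_int a) (of_int c)) (of_int a * of_int c + 2 * of_int k / real s)"
    unfolding LamS_def by auto
  have g1: "nxyr 1 0 0 \<in> Lambda s" "nxyr 0 1 0 \<in> Lambda s" "nxyr 0 0 (2 / real s) \<in> Lambda s"
    unfolding Lambda_def by (auto intro: gen_subgroup.intros)
  have h1: "nmat (Complex (of_int i) 0) 0 \<in> Lambda s" for i
    unfolding Lambda_def
    by (rule int_pow_in[where g = "nxyr 1 0 0"])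
      (auto simp: n_zero nxyr_def n_mult n_inv complex_eq_iff intro: gen_subgroup.gen_base)
  have h2: "nmat (Complex 0 (of_int i)) 0 \<in> Lambda s" for i
    unfolding Lambda_def
    by (rule int_pow_in[where g = "nxyr 0 1 0"])
      (auto simp: n_zero nxyr_def n_mult n_inv complex_eq_iff intro: gen_subgroup.gen_base)
  have h3: "nmat 0 (2 * of_int i / real s) \<in> Lambda s" for i
    unfolding Lambda_def
    by (rule int_pow_in[where g = "nxyr 0 0 (2 / real s)"])
      (auto simp: n_zero nxyr_def n_mult n_inv complex_eq_iff add_divide_distrib diff_divide_distrib intro: gen_subgroup.gen_base)
  have "x = nmat (Complex (of_int a) 0) 0 ** nmat (Complex 0 (of_int c)) 0 ** nmat 0 (2 * of_int k / real s)"
    unfolding x n_mult by (simp add: complex_eq_iff)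
  then show "x \<in> Lambda s" using h1 h2 h3 unfolding Lambda_def by (auto intro: gen_subgroup.intros)
qed

lemma Lambda_eq: "s \<ge> 1 \<Longrightarrow> Lambda s = LamS s"
  using Lambda_sub Lambda_sup by blast

definition nrm :: "(complex^3^3) set \<Rightarrow> complex^3^3 \<Rightarrow> bool" where
  "nrm L g \<longleftrightarrow> (\<lambda>x. g ** x ** matrix_inv g) ` L = L"

lemma normalizer_in_iff: "p \<in> normalizer_in H L \<longleftrightarrow> p \<in> H \<and> nrm L p"
  unfolding normalizer_in_def nrm_def by simp

lemma nrm_of_maps:
  assumes "g ** h = mat 1" "h ** g = mat 1"
    "(\<lambda>x. g ** x ** h) ` L \<subseteq> L" "(\<lambda>x. h ** x ** g) ` L \<subseteq> L"
  shows "nrm L g"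
proof -
  have mi: "matrix_inv g = h" by (rule minv_unique) (use assms in auto)
  have "L \<subseteq> (\<lambda>x. g ** x ** h) ` L"
  proof
    fix x assume x: "x \<in> L"
    have "g ** (h ** x ** g) ** h = (g ** h) ** x ** (g ** h)" by (simp add: matrix_mul_assoc)
    then have "x = g ** (h ** x ** g) ** h" by (simp add: assms(1) matrix_mul_lid matrix_mul_rid)
    moreover have "h ** x ** g \<in> L" using assms(4) x by blast
    ultimately show "x \<in> (\<lambda>x. g ** x ** h) ` L" by blast
  qed
  then show ?thesis unfolding nrm_def mi using assms(3) by blast
qed

lemma nrm_comp:
  assumes "g ** g' = mat 1" "g' ** g = mat 1" "h ** h' = mat 1" "h' ** h = mat 1"
    "nrm L g" "nrm L h"
  shows "nrm L (g ** h)"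
proof -
  have mg: "matrix_inv g = g'" by (rule minv_unique) (use assms in auto)
  have mh: "matrix_inv h = h'" by (rule minv_unique) (use assms in auto)
  have "(g ** h) ** (h' ** g') = mat 1"
    by (metis assms(1,3) matrix_mul_assoc matrix_mul_rid)
  moreover have "(h' ** g') ** (g ** h) = mat 1"
    by (metis assms(2,4) matrix_mul_assoc matrix_mul_rid)
  ultimately have mgh: "matrix_inv (g ** h) = h' ** g'" by (rule minv_unique)
  have e: "(\<lambda>x. (g ** h) ** x ** (h' ** g')) = (\<lambda>y. g ** y ** g') \<circ> (\<lambda>x. h ** x ** h')"
    by (rule ext) (simp add: matrix_mul_assoc)
  have "(\<lambda>x. (g ** h) ** x ** (h' ** g')) ` L = (\<lambda>y. g ** y ** g') ` ((\<lambda>x. h ** x ** h') ` L)"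
    unfolding e by (simp add: image_comp)
  then show ?thesis using assms(5,6) unfolding nrm_def mgh mg mh by simp
qed

lemma nrm_inv:
  assumes "g ** g' = mat 1" "g' ** g = mat 1" "nrm L g"
  shows "nrm L g'"
proof -
  have mg: "matrix_inv g = g'" by (rule minv_unique) (use assms in auto)
  have mg': "matrix_inv g' = g" by (rule minv_unique) (use assms in auto)
  have "g' ** (g ** x ** g') ** g = (g' ** g) ** x ** (g' ** g)" for x by (simp add: matrix_mul_assoc)
  then have "(\<lambda>x. g' ** x ** g) \<circ> (\<lambda>x. g ** x ** g') = id"
    by (intro ext) (simp add: assms(2) matrix_mul_lid matrix_mul_rid)
  then have "(\<lambda>x. g' ** x ** g) ` ((\<lambda>x. g ** x ** g') ` L) = L" by (simp add: image_comp)
  then show ?thesis using assms(3) unfolding nrm_def mg mg' by simp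
qed

lemma nrm_one: "nrm L (mat 1)"
proof -
  have "matrix_inv (mat 1 :: complex^3^3) = mat 1" by (rule minv_unique) (simp_all add: matrix_mul_lid)
  then show ?thesis unfolding nrm_def by (simp add: matrix_mul_lid matrix_mul_rid)
qed

lemma abs_le1: fixes a c :: int assumes "a*a + c*c = 1" shows "a = -1 \<or> a = 0 \<or> a = 1"
proof -
  have "c*c \<ge> 0" by simp
  then have le: "a*a \<le> 1" using assms by linarith
  have "\<bar>a\<bar> \<le> 1"
  proof (rule ccontr)
    assume "\<not> \<bar>a\<bar> \<le> 1"
    then have a2: "2 \<le> \<bar>a\<bar>" by linarith
    have "2*2 \<le> \<bar>a\<bar>*\<bar>a\<bar>" by (rule mult_mono) (use a2 in auto)
    then show False using abs_mult_self_eq[of a] le by simp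
  qed
  then show ?thesis by auto
qed

lemma int_sq_one: fixes a c :: int assumes "a*a + c*c = 1"
  shows "(a = 1 \<or> a = -1) \<and> c = 0 \<or> a = 0 \<and> (c = 1 \<or> c = -1)"
proof -
  have "a = -1 \<or> a = 0 \<or> a = 1" by (rule abs_le1[OF assms])
  moreover have "c = -1 \<or> c = 0 \<or> c = 1" using abs_le1[of c a] assms by (simp add: add.commute)
  ultimately show ?thesis using assms by (elim disjE) simp_all
qed

lemma gauss_unit4: fixes a c :: int assumes "cmod (Complex (of_int a) (of_int c)) = 1"
  shows "(Complex (of_int a) (of_int c))^4 = 1"
proof -
  have "(of_int a)^2 + (of_int c)^2 = (1::real)" using assms unfolding cmod_def by simp
  then have "real_of_int (a*a + c*c) = real_of_int 1" unfolding power2_eq_square by simp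
  then have "a*a + c*c = 1" by (simp only: of_int_eq_iff)
  then have "Complex (of_int a) (of_int c) \<in> {1, -1, \<i>, -\<i>}"
    using int_sq_one[OF \<open>a*a + c*c = 1\<close>] by (auto simp: complex_eq_iff)
  moreover have "\<i>^4 = 1" "(-\<i>)^4 = 1" "(-1::complex)^4 = 1"
    by (simp_all add: power_mult[of _ 2 2, simplified])
  ultimately show ?thesis by auto
qed

lemma fourth_roots: fixes w :: complex assumes "w^4 = 1" shows "w = 1 \<or> w = -1 \<or> w = \<i> \<or> w = - \<i>"
proof -
  have e1: "(w-1)*(w+1) = w^2 - 1" by (simp add: algebra_simps power2_eq_square)
  have e2: "(w-\<i>)*(w+\<i>) = w^2 + 1" by (simp add: algebra_simps power2_eq_square)
  have e3: "(w^2 - 1)*(w^2+1) = w^4 - 1" by (simp add: algebra_simps flip: power_add)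
  have "((w-1)*(w+1))*((w-\<i>)*(w+\<i>)) = 0" unfolding e1 e2 e3 using assms by simp
  then have "w - 1 = 0 \<or> w + 1 = 0 \<or> w - \<i> = 0 \<or> w + \<i> = 0" by (simp only: mult_eq_0_iff) blast
  then show ?thesis by (simp only: add_eq_0_iff2 right_minus_eq)
qed

lemma gauss_div: "\<beta> \<in> gauss_ints \<Longrightarrow> \<exists>m1 m2. \<beta> / of_nat s = Complex (of_int m1 / real s) (of_int m2 / real s) \<and> \<beta> = Complex (of_int m1) (of_int m2)"
  unfolding gauss_ints_def by (auto simp: complex_eq_iff)

lemma N_maps: assumes "s \<ge> 1" "\<beta> \<in> gauss_ints"
  shows "(\<lambda>x. nmat (\<beta> / of_nat s) \<rho> ** x ** nmat (-(\<beta> / of_nat s)) (-\<rho>)) ` LamS s \<subseteq> LamS s"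
proof
  fix y assume "y \<in> (\<lambda>x. nmat (\<beta> / of_nat s) \<rho> ** x ** nmat (-(\<beta> / of_nat s)) (-\<rho>)) ` LamS s"
  then obtain a c k where y: "y = nmat (\<beta> / of_nat s) \<rho> ** nmat (Complex (of_int a) (of_int c)) (of_int a * of_int c + 2 * of_int k / real s) ** nmat (-(\<beta> / of_nat s)) (-\<rho>)"
    unfolding LamS_def by auto
  obtain m1 m2 where m: "\<beta> / of_nat s = Complex (of_int m1 / real s) (of_int m2 / real s)"
    using gauss_div[OF assms(2)] by blast
  have "y = nmat (Complex (of_int a) (of_int c)) (of_int a * of_int c + 2 * of_int (k + m1 * c - m2 * a) / real s)"
    unfolding y n_conj m using assms(1) by (intro arg_cong2[where f=nmat]) (simp_all add: field_simps)
  then show "y \<in> LamS s" unfolding LamS_def by blast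
qed

lemma N_nrm: assumes "s \<ge> 1" "\<beta> \<in> gauss_ints" shows "nrm (LamS s) (nmat (\<beta> / of_nat s) \<rho>)"
proof (rule nrm_of_maps)
  show "nmat (\<beta> / of_nat s) \<rho> ** nmat (-(\<beta> / of_nat s)) (-\<rho>) = mat 1" by (simp add: n_mult n_zero)
  show "nmat (-(\<beta> / of_nat s)) (-\<rho>) ** nmat (\<beta> / of_nat s) \<rho> = mat 1" by (simp add: n_mult n_zero)
  show "(\<lambda>x. nmat (\<beta> / of_nat s) \<rho> ** x ** nmat (-(\<beta> / of_nat s)) (-\<rho>)) ` LamS s \<subseteq> LamS s"
    by (rule N_maps[OF assms])
  have "-\<beta> \<in> gauss_ints" using assms(2) unfolding gauss_ints_def
    by (auto simp: complex_eq_iff intro!: exI[of _ "- _"])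
  from N_maps[OF assms(1) this, of "-\<rho>"]
  show "(\<lambda>x. nmat (-(\<beta> / of_nat s)) (-\<rho>) ** x ** nmat (\<beta> / of_nat s) \<rho>) ` LamS s \<subseteq> LamS s" by simp
qed

lemma M_maps: assumes "s \<ge> 1" "cmod z = 1" "z^12 = 1"
  shows "(\<lambda>x. mmat z ** x ** mmat (1/z)) ` LamS s \<subseteq> LamS s"
proof
  fix y assume "y \<in> (\<lambda>x. mmat z ** x ** mmat (1/z)) ` LamS s"
  then obtain a c k where y: "y = nmat (z^3 * Complex (of_int a) (of_int c)) (of_int a * of_int c + 2 * of_int k / real s)"
    unfolding LamS_def using m_conj[OF assms(2)] by auto
  have "(z^3)^4 = 1" using assms(3) by (simp flip: power_mult)
  then consider "z^3 = 1" | "z^3 = -1" | "z^3 = \<i>" | "z^3 = -\<i>" using fourth_roots by blast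
  then show "y \<in> LamS s"
  proof cases
    case 1
    then show ?thesis unfolding y LamS_def by auto
  next
    case 2
    have "y = nmat (Complex (of_int (-a)) (of_int (-c))) (of_int (-a) * of_int (-c) + 2 * of_int k / real s)"
      unfolding y 2 by (intro arg_cong2[where f=nmat]) (simp_all add: complex_eq_iff)
    then show ?thesis unfolding LamS_def by blast
  next
    case 3
    have "y = nmat (Complex (of_int (-c)) (of_int a)) (of_int (-c) * of_int a + 2 * of_int (k + int s * a * c) / real s)"
      unfolding y 3 using assms(1) by (intro arg_cong2[where f=nmat]) (simp_all add: complex_eq_iff field_simps)
    then show ?thesis unfolding LamS_def by blast
  next
    case 4
    have "y = nmat (Complex (of_int c) (of_int (-a))) (of_int c * of_int (-a) + 2 * of_int (k + int s * a * c) / real s)"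
      unfolding y 4 using assms(1) by (intro arg_cong2[where f=nmat]) (simp_all add: complex_eq_iff field_simps)
    then show ?thesis unfolding LamS_def by blast
  qed
qed

lemma m_inv2: "z \<noteq> 0 \<Longrightarrow> mmat (1/z) ** mmat z = mat 1"
  using m_inv[of "1/z"] by simp

lemma M_nrm: assumes "s \<ge> 1" "cmod z = 1" "z^12 = 1" shows "nrm (LamS s) (mmat z)"
proof -
  have z0: "z \<noteq> 0" using assms by auto
  have "cmod (1/z) = 1" "(1/z)^12 = 1" using assms by (simp_all add: norm_divide power_one_over)
  from M_maps[OF assms(1) this] have "(\<lambda>x. mmat (1/z) ** x ** mmat z) ` LamS s \<subseteq> LamS s" by simp
  then show ?thesis using M_maps[OF assms] m_inv[OF z0] m_inv2[OF z0] by (intro nrm_of_maps) auto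
qed

lemma inv_prod:
  assumes "g ** g' = mat 1" "g' ** g = mat 1" "h ** h' = mat 1" "h' ** h = mat 1"
  shows "(g ** h) ** (h' ** g') = (mat 1 :: complex^3^3)" "(h' ** g') ** (g ** h) = (mat 1 :: complex^3^3)"
  by (metis assms(1,3) matrix_mul_assoc matrix_mul_rid) (metis assms(2,4) matrix_mul_assoc matrix_mul_rid)

lemma LamS_mem: "nmat (Complex (of_int a) (of_int c)) (of_int a * of_int c + 2 * of_int k / real s) \<in> LamS s"
  unfolding LamS_def by blast

lemma LamS_elim: assumes "nmat B R \<in> LamS s"
  obtains a c k where "B = Complex (of_int a) (of_int c)" "R = of_int a * of_int c + 2 * of_int k / real s"
  using assms unfolding LamS_def by (auto dest: n_inj)

lemma e1_mem: "nmat 1 0 \<in> LamS s"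
  using LamS_mem[of 1 0 0 s] by (simp add: one_complex.code)

lemma e2_mem: "nmat \<i> 0 \<in> LamS s"
  using LamS_mem[of 0 1 0 s] by (simp add: imaginary_unit.code)

lemma m_inv_eq: "cmod z = 1 \<Longrightarrow> matrix_inv (mmat z) = mmat (1/z)"
  by (rule minv_unique) (auto intro: m_inv m_inv2)

lemma a_inv2: "t > 0 \<Longrightarrow> amat (1/t) ** amat t = mat 1"
  using a_inv[of "1/t"] by simp

lemma P_assoc: "(N1 ** A1 ** M1) ** X ** (M2 ** A2 ** N2) = N1 ** (A1 ** (M1 ** X ** M2) ** A2) ** N2"
  for N1 A1 M1 X M2 A2 N2 :: "complex^3^3"
  by (simp add: matrix_mul_assoc)

lemma P_formula: assumes "t > 0" "cmod z = 1"
  shows "(nmat b \<rho> ** amat t ** mmat z) ** nmat \<beta> r ** (mmat (1/z) ** amat (1/t) ** nmat (-b) (-\<rho>))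
     = nmat (of_real t * (z^3 * \<beta>)) (t^2 * r + 2 * Im (cnj b * (of_real t * (z^3 * \<beta>))))"
  unfolding P_assoc m_conj[OF assms(2)] a_conj[OF assms(1)] n_conj ..

lemma P_inv: assumes "t > 0" "cmod z = 1"
  shows "(nmat b \<rho> ** amat t ** mmat z) ** (mmat (1/z) ** amat (1/t) ** nmat (-b) (-\<rho>)) = mat 1"
    "(mmat (1/z) ** amat (1/t) ** nmat (-b) (-\<rho>)) ** (nmat b \<rho> ** amat t ** mmat z) = mat 1"
proof -
  have "(nmat b \<rho> ** amat t ** mmat z) ** (mmat (1/z) ** amat (1/t) ** nmat (-b) (-\<rho>))
     = (nmat b \<rho> ** amat t ** mmat z) ** nmat 0 0 ** (mmat (1/z) ** amat (1/t) ** nmat (-b) (-\<rho>))"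
    by (simp add: n_zero matrix_mul_rid)
  also have "\<dots> = mat 1" unfolding P_formula[OF assms] by (simp add: n_zero)
  finally show "(nmat b \<rho> ** amat t ** mmat z) ** (mmat (1/z) ** amat (1/t) ** nmat (-b) (-\<rho>)) = mat 1" .
  have z0: "z \<noteq> 0" using assms by auto
  have "(mmat (1/z) ** amat (1/t) ** nmat (-b) (-\<rho>)) ** (nmat b \<rho> ** amat t ** mmat z)
     = mmat (1/z) ** (amat (1/t) ** (nmat (-b) (-\<rho>) ** nmat b \<rho>) ** amat t) ** mmat z"
    by (simp add: matrix_mul_assoc)
  also have "\<dots> = mat 1"
    by (simp add: n_mult n_zero matrix_mul_rid matrix_mul_lid a_inv2[OF assms(1)] m_inv2[OF z0])
  finally show "(mmat (1/z) ** amat (1/t) ** nmat (-b) (-\<rho>)) ** (nmat b \<rho> ** amat t ** mmat z) = mat 1" .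
qed

lemma partN: assumes s: "s \<ge> 1"
  shows "normalizer_in Ngrp (LamS s) = {nmat (\<beta> / of_nat s) \<rho> | \<beta> \<rho>. \<beta> \<in> gauss_ints}"
proof
  show "normalizer_in Ngrp (LamS s) \<subseteq> {nmat (\<beta> / of_nat s) \<rho> | \<beta> \<rho>. \<beta> \<in> gauss_ints}"
  proof
    fix p assume p: "p \<in> normalizer_in Ngrp (LamS s)"
    then obtain b \<rho> where pb: "p = nmat b \<rho>" unfolding normalizer_in_iff Ngrp_def by auto
    from p have img: "(\<lambda>x. nmat b \<rho> ** x ** nmat (-b) (-\<rho>)) ` LamS s = LamS s"
      unfolding normalizer_in_iff nrm_def pb n_inv by simp
    have "nmat b \<rho> ** nmat 1 0 ** nmat (-b) (-\<rho>) \<in> LamS s" using img e1_mem by blast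
    then have "nmat 1 (2 * Im (cnj b)) \<in> LamS s" unfolding n_conj by simp
    then obtain a c k where 1: "(1::complex) = Complex (of_int a) (of_int c)"
      and r1: "2 * Im (cnj b) = of_int a * of_int c + 2 * of_int k / real s" by (rule LamS_elim)
    from 1 have "c = 0" by (simp add: complex_eq_iff)
    with r1 have imb: "Im b = - of_int k / real s" by simp
    have "nmat b \<rho> ** nmat \<i> 0 ** nmat (-b) (-\<rho>) \<in> LamS s" using img e2_mem by blast
    then have "nmat \<i> (2 * Re b) \<in> LamS s" unfolding n_conj by simp
    then obtain a' c' k' where 2: "\<i> = Complex (of_int a') (of_int c')"
      and r2: "2 * Re b = of_int a' * of_int c' + 2 * of_int k' / real s" by (rule LamS_elim)
    from 2 have "a' = 0" by (simp add: complex_eq_iff)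
    with r2 have reb: "Re b = of_int k' / real s" by simp
    have g: "Complex (of_int k') (of_int (-k)) \<in> gauss_ints" unfolding gauss_ints_def by blast
    have "b = Complex (of_int k') (of_int (-k)) / of_nat s" using imb reb s by (simp add: complex_eq_iff)
    then show "p \<in> {nmat (\<beta> / of_nat s) \<rho> | \<beta> \<rho>. \<beta> \<in> gauss_ints}" using g pb by blast
  qed
  show "{nmat (\<beta> / of_nat s) \<rho> | \<beta> \<rho>. \<beta> \<in> gauss_ints} \<subseteq> normalizer_in Ngrp (LamS s)"
  proof
    fix p assume "p \<in> {nmat (\<beta> / of_nat s) \<rho> | \<beta> \<rho>. \<beta> \<in> gauss_ints}"
    then obtain \<beta> \<rho> where pe: "p = nmat (\<beta> / of_nat s) \<rho>" and g: "\<beta> \<in> gauss_ints" by blast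
    have "p \<in> Ngrp" unfolding pe Ngrp_def by blast
    moreover have "nrm (LamS s) p" unfolding pe by (rule N_nrm[OF s g])
    ultimately show "p \<in> normalizer_in Ngrp (LamS s)" unfolding normalizer_in_iff by blast
  qed
qed

lemma partM: assumes s: "s \<ge> 1"
  shows "normalizer_in Mgrp (LamS s) = {mmat \<zeta> | \<zeta>. cmod \<zeta> = 1 \<and> \<zeta> ^ 12 = 1}"
proof
  show "normalizer_in Mgrp (LamS s) \<subseteq> {mmat \<zeta> | \<zeta>. cmod \<zeta> = 1 \<and> \<zeta> ^ 12 = 1}"
  proof
    fix p assume p: "p \<in> normalizer_in Mgrp (LamS s)"
    then obtain z where pz: "p = mmat z" and z1: "cmod z = 1" unfolding normalizer_in_iff Mgrp_def by auto
    from p have img: "(\<lambda>x. mmat z ** x ** mmat (1/z)) ` LamS s = LamS s"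
      unfolding normalizer_in_iff nrm_def pz m_inv_eq[OF z1] by simp
    have "mmat z ** nmat 1 0 ** mmat (1/z) \<in> LamS s" using img e1_mem by blast
    then have "nmat (z^3) 0 \<in> LamS s" unfolding m_conj[OF z1] by simp
    then obtain a c k where 1: "z^3 = Complex (of_int a) (of_int c)" by (rule LamS_elim)
    have "cmod (Complex (of_int a) (of_int c)) = 1" unfolding 1[symmetric] using z1 by (simp add: norm_power)
    then have "(z^3)^4 = 1" unfolding 1 by (rule gauss_unit4)
    then have "z^12 = 1" by (simp flip: power_mult)
    then show "p \<in> {mmat \<zeta> | \<zeta>. cmod \<zeta> = 1 \<and> \<zeta> ^ 12 = 1}" using pz z1 by blast
  qed
  show "{mmat \<zeta> | \<zeta>. cmod \<zeta> = 1 \<and> \<zeta> ^ 12 = 1} \<subseteq> normalizer_in Mgrp (LamS s)"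
  proof
    fix p assume "p \<in> {mmat \<zeta> | \<zeta>. cmod \<zeta> = 1 \<and> \<zeta> ^ 12 = 1}"
    then obtain z where pe: "p = mmat z" and z: "cmod z = 1" "z^12 = 1" by blast
    have "p \<in> Mgrp" unfolding pe Mgrp_def using z by blast
    moreover have "nrm (LamS s) p" unfolding pe by (rule M_nrm[OF s z])
    ultimately show "p \<in> normalizer_in Mgrp (LamS s)" unfolding normalizer_in_iff by blast
  qed
qed

lemma Pgrp_elim: assumes "p \<in> Pgrp"
  obtains b \<rho> t z where "p = nmat b \<rho> ** amat t ** mmat z" "t > 0" "cmod z = 1"
  using assms unfolding Pgrp_def Ngrp_def Agrp_def Mgrp_def by blast

lemma int_prod_one: fixes a c a' c' :: int
  assumes "(a'*a' + c'*c') * (a*a + c*c) = 1" shows "a'*a' + c'*c' = 1"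
proof -
  have "a'*a' + c'*c' \<ge> 0" by simp
  moreover have "a'*a' + c'*c' \<noteq> 0" using assms by auto
  ultimately have "a'*a' + c'*c' > 0" by (auto simp: less_le)
  then show ?thesis using assms pos_zmult_eq_1_iff by blast
qed

lemma partP_sub: assumes s: "s \<ge> 1" and p: "p \<in> normalizer_in Pgrp (LamS s)"
  shows "\<exists>b \<rho> z. p = nmat b \<rho> ** mmat z \<and> cmod z = 1 \<and> z^12 = 1 \<and> nrm (LamS s) (nmat b \<rho>)"
proof -
  from p have pP: "p \<in> Pgrp" and np: "nrm (LamS s) p" unfolding normalizer_in_iff by auto
  obtain b \<rho> t z where pe: "p = nmat b \<rho> ** amat t ** mmat z" and t: "t > 0" and z1: "cmod z = 1"
    using pP by (rule Pgrp_elim)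
  define q where "q = mmat (1/z) ** amat (1/t) ** nmat (-b) (-\<rho>)"
  have pq: "p ** q = mat 1" "q ** p = mat 1" unfolding pe q_def using P_inv[OF t z1] by auto
  have mi: "matrix_inv p = q" by (rule minv_unique) (use pq in auto)
  have img: "(\<lambda>x. p ** x ** q) ` LamS s = LamS s" using np unfolding nrm_def mi .
  have F: "p ** nmat \<beta> r ** q = nmat (of_real t * (z^3 * \<beta>)) (t^2 * r + 2 * Im (cnj b * (of_real t * (z^3 * \<beta>))))" for \<beta> r
    unfolding pe q_def by (rule P_formula[OF t z1])
  have "nmat 1 0 \<in> (\<lambda>x. p ** x ** q) ` LamS s" using img e1_mem by blast
  then obtain x where x: "x \<in> LamS s" "nmat 1 0 = p ** x ** q" by blast
  then obtain a c k where xe: "x = nmat (Complex (of_int a) (of_int c)) (of_int a * of_int c + 2 * of_int k / real s)"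
    unfolding LamS_def by blast
  from x(2) have "nmat 1 0 = nmat (of_real t * (z^3 * Complex (of_int a) (of_int c))) (t^2 * (of_int a * of_int c + 2 * of_int k / real s) + 2 * Im (cnj b * (of_real t * (z^3 * Complex (of_int a) (of_int c)))))"
    unfolding xe F .
  then have u1: "of_real t * z^3 * Complex (of_int a) (of_int c) = 1" using n_inj by (metis mult.assoc)
  have "p ** nmat 1 0 ** q \<in> LamS s" using img e1_mem by blast
  then have "nmat (of_real t * z^3) (t^2 * 0 + 2 * Im (cnj b * (of_real t * z^3))) \<in> LamS s" unfolding F by simp
  then obtain a' c' k' where u2: "of_real t * z^3 = Complex (of_int a') (of_int c')" by (rule LamS_elim)
  have "cmod (Complex (of_int a') (of_int c')) * cmod (Complex (of_int a) (of_int c)) = 1"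
    using u1 unfolding u2 by (metis norm_mult norm_one)
  then have "(cmod (Complex (of_int a') (of_int c')))^2 * (cmod (Complex (of_int a) (of_int c)))^2 = 1"
    by (metis power_mult_distrib power_one)
  then have "real_of_int ((a'*a' + c'*c') * (a*a + c*c)) = real_of_int 1"
    unfolding cmod_power2 by (simp add: power2_eq_square)
  then have "(a'*a' + c'*c') * (a*a + c*c) = 1" by (simp only: of_int_eq_iff)
  then have n1: "a'*a' + c'*c' = 1" by (rule int_prod_one)
  have cm1: "cmod (Complex (of_int a') (of_int c')) = 1"
  proof -
    have "(cmod (Complex (of_int a') (of_int c')))^2 = 1"
      unfolding cmod_power2 using n1 by (simp add: power2_eq_square flip: of_int_mult of_int_add)
    then show ?thesis using norm_ge_zero[of "Complex (of_int a') (of_int c')"] by (auto simp: power2_eq_1_iff)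
  qed
  have "cmod (of_real t * z^3) = t" using t z1 by (simp add: norm_mult norm_power)
  then have t1: "t = 1" using cm1 u2 by simp
  have "(Complex (of_int a') (of_int c'))^4 = 1" by (rule gauss_unit4[OF cm1])
  then have "(z^3)^4 = 1" using u2 t1 by simp
  then have z12: "z^12 = 1" by (simp flip: power_mult)
  have pe2: "p = nmat b \<rho> ** mmat z" unfolding pe t1 a_one by (simp add: matrix_mul_rid)
  have z0: "z \<noteq> 0" using z1 by auto
  have c1z: "cmod (1/z) = 1" "(1/z)^12 = 1" using z1 z12 by (simp_all add: norm_divide power_one_over)
  have nm: "nrm (LamS s) (mmat (1/z))" by (rule M_nrm[OF s c1z])
  have "nrm (LamS s) (p ** mmat (1/z))"
    by (rule nrm_comp[OF pq m_inv2[OF z0] _ np nm]) (simp add: m_inv2[OF z0, simplified] m_inv[OF z0])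
  moreover have "p ** mmat (1/z) = nmat b \<rho>"
    unfolding pe2 matrix_mul_assoc[symmetric] m_inv[OF z0] matrix_mul_rid ..
  ultimately show ?thesis using pe2 z1 z12 by auto
qed

theorem proposition8p5:
  fixes \<sigma> :: nat
  assumes "\<sigma> \<ge> 1"
  shows "normalizer_in Ngrp (Lambda \<sigma>)
           = {nmat (\<beta> / of_nat \<sigma>) \<rho> | \<beta> \<rho>. \<beta> \<in> gauss_ints}
       \<and> normalizer_in Mgrp (Lambda \<sigma>) = {mmat \<zeta> | \<zeta>. cmod \<zeta> = 1 \<and> \<zeta> ^ 12 = 1}
       \<and> normalizer_in Pgrp (Lambda \<sigma>)
           = {x ** y | x y. x \<in> normalizer_in Ngrp (Lambda \<sigma>) \<and> y \<in> normalizer_in Mgrp (Lambda \<sigma>)}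
       \<and> normalizer_in Ngrp (Lambda \<sigma>) \<inter> normalizer_in Mgrp (Lambda \<sigma>) = {mat 1}
       \<and> (\<forall>p \<in> normalizer_in Pgrp (Lambda \<sigma>). \<forall>x \<in> normalizer_in Ngrp (Lambda \<sigma>).
            p ** x ** matrix_inv p \<in> normalizer_in Ngrp (Lambda \<sigma>))"
proof -
  let ?L = "LamS \<sigma>"
  have L: "Lambda \<sigma> = ?L" by (rule Lambda_eq[OF assms])
  have P1: "normalizer_in Ngrp ?L = {nmat (\<beta> / of_nat \<sigma>) \<rho> | \<beta> \<rho>. \<beta> \<in> gauss_ints}"
    by (rule partN[OF assms])
  have P2: "normalizer_in Mgrp ?L = {mmat \<zeta> | \<zeta>. cmod \<zeta> = 1 \<and> \<zeta> ^ 12 = 1}"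
    by (rule partM[OF assms])
  have P3: "normalizer_in Pgrp ?L = {x ** y | x y. x \<in> normalizer_in Ngrp ?L \<and> y \<in> normalizer_in Mgrp ?L}"
  proof
    show "normalizer_in Pgrp ?L \<subseteq> {x ** y | x y. x \<in> normalizer_in Ngrp ?L \<and> y \<in> normalizer_in Mgrp ?L}"
    proof
      fix p assume "p \<in> normalizer_in Pgrp ?L"
      from partP_sub[OF assms this] obtain b \<rho> z where
        pe: "p = nmat b \<rho> ** mmat z" and z: "cmod z = 1" "z^12 = 1" and nb: "nrm ?L (nmat b \<rho>)" by blast
      have "nmat b \<rho> \<in> normalizer_in Ngrp ?L" unfolding normalizer_in_iff Ngrp_def using nb by blast
      moreover have "mmat z \<in> normalizer_in Mgrp ?L" unfolding P2 using z by blast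
      ultimately show "p \<in> {x ** y | x y. x \<in> normalizer_in Ngrp ?L \<and> y \<in> normalizer_in Mgrp ?L}"
        using pe by blast
    qed
    show "{x ** y | x y. x \<in> normalizer_in Ngrp ?L \<and> y \<in> normalizer_in Mgrp ?L} \<subseteq> normalizer_in Pgrp ?L"
    proof
      fix p assume "p \<in> {x ** y | x y. x \<in> normalizer_in Ngrp ?L \<and> y \<in> normalizer_in Mgrp ?L}"
      then obtain x y where pe: "p = x ** y" and x: "x \<in> normalizer_in Ngrp ?L" and y: "y \<in> normalizer_in Mgrp ?L"
        by blast
      from x obtain b \<rho> where xe: "x = nmat b \<rho>" and nx: "nrm ?L x" unfolding normalizer_in_iff Ngrp_def by blast
      from y obtain z where ye: "y = mmat z" and z1: "cmod z = 1" and ny: "nrm ?L y"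
        unfolding normalizer_in_iff Mgrp_def by blast
      have z0: "z \<noteq> 0" using z1 by auto
      have "p = nmat b \<rho> ** amat 1 ** mmat z" unfolding pe xe ye a_one by (simp add: matrix_mul_rid)
      then have "p \<in> Pgrp" unfolding Pgrp_def Ngrp_def Agrp_def Mgrp_def using z1 by fastforce
      moreover have "nrm ?L p" unfolding pe
      proof (rule nrm_comp[OF _ _ _ _ nx ny])
        show "x ** nmat (-b) (-\<rho>) = mat 1" "nmat (-b) (-\<rho>) ** x = mat 1" unfolding xe by (simp_all add: n_mult n_zero)
        show "y ** mmat (1/z) = mat 1" "mmat (1/z) ** y = mat 1" unfolding ye using m_inv[OF z0] m_inv2[OF z0] by simp_all
      qed
      ultimately show "p \<in> normalizer_in Pgrp ?L" unfolding normalizer_in_iff by blast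
    qed
  qed
  have P4: "normalizer_in Ngrp ?L \<inter> normalizer_in Mgrp ?L = {mat 1}"
  proof
    show "normalizer_in Ngrp ?L \<inter> normalizer_in Mgrp ?L \<subseteq> {mat 1}"
    proof
      fix x assume "x \<in> normalizer_in Ngrp ?L \<inter> normalizer_in Mgrp ?L"
      then have "x \<in> Ngrp" "x \<in> Mgrp" by (auto simp: normalizer_in_iff)
      then obtain b r z where "x = nmat b r" "x = mmat z" unfolding Ngrp_def Mgrp_def by blast
      then have e: "nmat b r = mmat z" by simp
      then have "b = 0" unfolding nmat_def mmat_def mat3_eq by simp
      moreover have "r = 0" using e \<open>b = 0\<close> unfolding nmat_def mmat_def mat3_eq by (simp add: complex_eq_iff)
      ultimately show "x \<in> {mat 1}" using \<open>x = nmat b r\<close> n_zero by simp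
    qed
    have "mat 1 \<in> Ngrp" unfolding Ngrp_def by (rule CollectI, rule exI[of _ 0], rule exI[of _ 0]) (simp add: n_zero)
    moreover have "mat 1 \<in> Mgrp" unfolding Mgrp_def by (rule CollectI, rule exI[of _ 1]) (simp add: m_one)
    ultimately show "{mat 1} \<subseteq> normalizer_in Ngrp ?L \<inter> normalizer_in Mgrp ?L"
      using nrm_one by (auto simp: normalizer_in_iff)
  qed
  have P5: "\<forall>p \<in> normalizer_in Pgrp ?L. \<forall>x \<in> normalizer_in Ngrp ?L.
            p ** x ** matrix_inv p \<in> normalizer_in Ngrp ?L"
  proof (intro ballI)
    fix p x assume p: "p \<in> normalizer_in Pgrp ?L" and x: "x \<in> normalizer_in Ngrp ?L"
    from p have pP: "p \<in> Pgrp" and np: "nrm ?L p" unfolding normalizer_in_iff by auto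
    obtain b \<rho> t z where pe: "p = nmat b \<rho> ** amat t ** mmat z" and t: "t > 0" and z1: "cmod z = 1"
      using pP by (rule Pgrp_elim)
    from x obtain \<beta> r where xe: "x = nmat \<beta> r" and nx: "nrm ?L x" unfolding normalizer_in_iff Ngrp_def by blast
    define q where "q = mmat (1/z) ** amat (1/t) ** nmat (-b) (-\<rho>)"
    have pq: "p ** q = mat 1" "q ** p = mat 1" unfolding pe q_def using P_inv[OF t z1] by auto
    have mi: "matrix_inv p = q" by (rule minv_unique) (use pq in auto)
    have xx: "x ** nmat (-\<beta>) (-r) = mat 1" "nmat (-\<beta>) (-r) ** x = mat 1" unfolding xe by (simp_all add: n_mult n_zero)
    have F: "p ** x ** q = nmat (of_real t * (z^3 * \<beta>)) (t^2 * r + 2 * Im (cnj b * (of_real t * (z^3 * \<beta>))))"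
      unfolding pe q_def xe by (rule P_formula[OF t z1])
    have "p ** x ** q \<in> Ngrp" unfolding F Ngrp_def by blast
    moreover have "nrm ?L (p ** x ** q)"
    proof -
      have npx: "nrm ?L (p ** x)" by (rule nrm_comp[OF pq xx np nx])
      have nq: "nrm ?L q" by (rule nrm_inv[OF pq np])
      have i1: "(p ** x) ** (nmat (-\<beta>) (-r) ** q) = mat 1" "(nmat (-\<beta>) (-r) ** q) ** (p ** x) = mat 1"
        using inv_prod[OF pq xx] by auto
      show ?thesis by (rule nrm_comp[OF i1 pq(2) pq(1) npx nq])
    qed
    ultimately show "p ** x ** matrix_inv p \<in> normalizer_in Ngrp ?L" unfolding mi normalizer_in_iff by blast
  qed
  show ?thesis unfolding L using P1 P2 P3 P4 P5 by blast
qed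

end
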